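(* Let $\Phi$ be irreducible with highest root $\gamma$ and $\mathfrak h_\gamma=\Phi^+\setminus\{\gamma\}$. Fix $w\in W$ and $\beta\in\Phi^+$. Then there is at most one $v\in W$ such that $v>w$ in Bruhat order, $\beta\in N^\gamma_w\cap N_v$, $\ell_\gamma(w)=\ell_\gamma(v)$, and $v^{-1}\beta=-\gamma$.
   Context: $\Phi$ is a crystallographic root system in a real Euclidean space with base $\Delta$, positive roots $\Phi^+$, $\Phi^-=-\Phi^+$, Weyl group $W$; $s_\alpha$ is the reflection through $\alpha$. $\Phi$ irreducible means it is not a disjoint union of two root systems; then there is a unique highest root $\gamma\in\Phi^+$ with $\alpha\prec\gamma$ for all $\alpha\in\Phi$, where $\alpha\prec\beta$ means $\beta-\alpha$ is a sum of positive roots. For $w\in W$, $N_w=\{\beta\in\Phi^+: w^{-1}\beta\in\Phi^-\}$, $N^\gamma_w=\{\beta\in\Phi^+: w^{-1}\beta\in-\mathfrak h_\gamma\}$, and $\ell_\gamma(w)=|N^\gamma_w|$. Bruhat order $<$ is the transitive closure of the relations $u<s_\alpha u$ for $\alpha\in\Phi^+$ with $(s_\alpha u)^{-1}\alpha\in\Phi^-$. *)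

theory Defs
  imports "HOL-Analysis.Analysis"
begin

definition refl :: "'a::euclidean_space \<Rightarrow> 'a \<Rightarrow> 'a" where
  "refl \<alpha> x = x - ((2 * (x \<bullet> \<alpha>)) / (\<alpha> \<bullet> \<alpha>)) *\<^sub>R \<alpha>"

definition root_system :: "'a::euclidean_space set \<Rightarrow> bool" where
  "root_system \<Phi> \<longleftrightarrow>
     finite \<Phi> \<and> 0 \<notin> \<Phi> \<and> span \<Phi> = UNIV \<and>
     (\<forall>\<alpha>\<in>\<Phi>. \<forall>c::real. c *\<^sub>R \<alpha> \<in> \<Phi> \<longrightarrow> c = 1 \<or> c = -1) \<and>
     (\<forall>\<alpha>\<in>\<Phi>. refl \<alpha> ` \<Phi> = \<Phi>) \<and>
     (\<forall>\<alpha>\<in>\<Phi>. \<forall>\<beta>\<in>\<Phi>. (2 * (\<beta> \<bullet> \<alpha>)) / (\<alpha> \<bullet> \<alpha>) \<in> \<int>)"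

definition irreducible_rs :: "'a::euclidean_space set \<Rightarrow> bool" where
  "irreducible_rs \<Phi> \<longleftrightarrow>
     \<not> (\<exists>\<Phi>1 \<Phi>2. \<Phi>1 \<noteq> {} \<and> \<Phi>2 \<noteq> {} \<and> \<Phi>1 \<union> \<Phi>2 = \<Phi> \<and> \<Phi>1 \<inter> \<Phi>2 = {} \<and>
         (\<forall>\<alpha>\<in>\<Phi>1. \<forall>\<beta>\<in>\<Phi>2. \<alpha> \<bullet> \<beta> = 0))"

definition is_base :: "'a::euclidean_space set \<Rightarrow> 'a set \<Rightarrow> bool" where
  "is_base \<Phi> \<Delta> \<longleftrightarrow> \<Delta> \<subseteq> \<Phi> \<and> independent \<Delta> \<and>
     (\<forall>\<beta>\<in>\<Phi>. \<exists>c::'a \<Rightarrow> int. \<beta> = (\<Sum>\<delta>\<in>\<Delta>. of_int (c \<delta>) *\<^sub>R \<delta>) \<and>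
         ((\<forall>\<delta>\<in>\<Delta>. c \<delta> \<ge> 0) \<or> (\<forall>\<delta>\<in>\<Delta>. c \<delta> \<le> 0)))"

definition pos_roots :: "'a::euclidean_space set \<Rightarrow> 'a set \<Rightarrow> 'a set" where
  "pos_roots \<Phi> \<Delta> = {\<beta>\<in>\<Phi>. \<exists>c::'a \<Rightarrow> int. \<beta> = (\<Sum>\<delta>\<in>\<Delta>. of_int (c \<delta>) *\<^sub>R \<delta>) \<and>
         (\<forall>\<delta>\<in>\<Delta>. c \<delta> \<ge> 0)}"

definition neg_roots :: "'a::euclidean_space set \<Rightarrow> 'a set \<Rightarrow> 'a set" where
  "neg_roots \<Phi> \<Delta> = uminus ` pos_roots \<Phi> \<Delta>"

definition root_prec :: "'a::euclidean_space set \<Rightarrow> 'a set \<Rightarrow> 'a \<Rightarrow> 'a \<Rightarrow> bool" where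
  "root_prec \<Phi> \<Delta> \<alpha> \<beta> \<longleftrightarrow>
     (\<exists>m::'a \<Rightarrow> nat. \<beta> - \<alpha> = (\<Sum>x\<in>pos_roots \<Phi> \<Delta>. of_nat (m x) *\<^sub>R x))"

definition highest_root :: "'a::euclidean_space set \<Rightarrow> 'a set \<Rightarrow> 'a \<Rightarrow> bool" where
  "highest_root \<Phi> \<Delta> \<gamma> \<longleftrightarrow> \<gamma> \<in> pos_roots \<Phi> \<Delta> \<and> (\<forall>\<alpha>\<in>\<Phi>. root_prec \<Phi> \<Delta> \<alpha> \<gamma>)"

inductive_set weyl_group :: "'a::euclidean_space set \<Rightarrow> ('a \<Rightarrow> 'a) set" for \<Phi> where
  weyl_id: "id \<in> weyl_group \<Phi>"
| weyl_step: "w \<in> weyl_group \<Phi> \<Longrightarrow> \<alpha> \<in> \<Phi> \<Longrightarrow> refl \<alpha> \<circ> w \<in> weyl_group \<Phi>"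

definition N_set :: "'a::euclidean_space set \<Rightarrow> 'a set \<Rightarrow> ('a \<Rightarrow> 'a) \<Rightarrow> 'a set" where
  "N_set \<Phi> \<Delta> w = {\<beta>\<in>pos_roots \<Phi> \<Delta>. inv w \<beta> \<in> neg_roots \<Phi> \<Delta>}"

definition h_gamma :: "'a::euclidean_space set \<Rightarrow> 'a set \<Rightarrow> 'a \<Rightarrow> 'a set" where
  "h_gamma \<Phi> \<Delta> \<gamma> = pos_roots \<Phi> \<Delta> - {\<gamma>}"

definition N_gamma :: "'a::euclidean_space set \<Rightarrow> 'a set \<Rightarrow> 'a \<Rightarrow> ('a \<Rightarrow> 'a) \<Rightarrow> 'a set" where
  "N_gamma \<Phi> \<Delta> \<gamma> w = {\<beta>\<in>pos_roots \<Phi> \<Delta>. inv w \<beta> \<in> uminus ` h_gamma \<Phi> \<Delta> \<gamma>}"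

definition ell_gamma :: "'a::euclidean_space set \<Rightarrow> 'a set \<Rightarrow> 'a \<Rightarrow> ('a \<Rightarrow> 'a) \<Rightarrow> nat" where
  "ell_gamma \<Phi> \<Delta> \<gamma> w = card (N_gamma \<Phi> \<Delta> \<gamma> w)"

definition bruhat_step :: "'a::euclidean_space set \<Rightarrow> 'a set \<Rightarrow> ('a \<Rightarrow> 'a) \<Rightarrow> ('a \<Rightarrow> 'a) \<Rightarrow> bool" where
  "bruhat_step \<Phi> \<Delta> u v \<longleftrightarrow> u \<in> weyl_group \<Phi> \<and>
     (\<exists>\<alpha>\<in>pos_roots \<Phi> \<Delta>. v = refl \<alpha> \<circ> u \<and> inv v \<alpha> \<in> neg_roots \<Phi> \<Delta>)"

definition bruhat_less :: "'a::euclidean_space set \<Rightarrow> 'a set \<Rightarrow> ('a \<Rightarrow> 'a) \<Rightarrow> ('a \<Rightarrow> 'a) \<Rightarrow> bool" where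
  "bruhat_less \<Phi> \<Delta> = tranclp (bruhat_step \<Phi> \<Delta>)"

end

theory Submission
  imports Defs
begin

lemma refl_linear: "linear (refl a)"
  unfolding refl_def
  by (rule linearI) (auto simp: inner_add_left algebra_simps add_divide_distrib diff_divide_distrib)

lemma refl_refl: "(a::'a::euclidean_space) \<noteq> 0 \<Longrightarrow> refl a (refl a x) = x"
proof -
  assume a: "a \<noteq> 0"
  have aa: "a \<bullet> a \<noteq> 0" using a by simp
  show ?thesis unfolding refl_def
    using aa by (simp add: inner_diff_left algebra_simps field_simps)
qed

lemma refl_self: "(a::'a::euclidean_space) \<noteq> 0 \<Longrightarrow> refl a a = - a"
  unfolding refl_def by (simp add: algebra_simps scaleR_2)

lemma refl_comp: "(a::'a::euclidean_space) \<noteq> 0 \<Longrightarrow> refl a \<circ> refl a = id"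
  by (auto simp: refl_refl)

lemma refl_bij: "(a::'a::euclidean_space) \<noteq> 0 \<Longrightarrow> bij (refl a)"
  by (metis bij_betw_imageI inj_on_inverseI refl_refl surjI)

lemma refl_inv: "(a::'a::euclidean_space) \<noteq> 0 \<Longrightarrow> inv (refl a) = refl a"
  by (intro inv_unique_comp) (simp_all add: refl_comp)

lemma lin_comb_diff:
  fixes D :: "'a::euclidean_space set"
  shows "(\<Sum>d\<in>D. of_int (a d) *\<^sub>R d) - of_int m *\<^sub>R (\<Sum>d\<in>D. of_int (b d) *\<^sub>R d)
     = (\<Sum>d\<in>D. of_int (a d - m * b d) *\<^sub>R d)"
  by (simp add: scaleR_sum_right sum_subtractf[symmetric] algebra_simps)

context
  fixes \<Phi> \<Delta> :: "'a::euclidean_space set"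
  assumes RS: "root_system \<Phi>" and BS: "is_base \<Phi> \<Delta>"
begin

lemma finPhi: "finite \<Phi>" and zPhi: "0 \<notin> \<Phi>"
  and redPhi: "\<And>\<alpha> c. \<alpha> \<in> \<Phi> \<Longrightarrow> c *\<^sub>R \<alpha> \<in> \<Phi> \<Longrightarrow> c = 1 \<or> c = -1"
  and reflPhi: "\<And>\<alpha>. \<alpha> \<in> \<Phi> \<Longrightarrow> refl \<alpha> ` \<Phi> = \<Phi>"
  and intPhi: "\<And>\<alpha> \<beta>. \<alpha> \<in> \<Phi> \<Longrightarrow> \<beta> \<in> \<Phi> \<Longrightarrow> (2 * (\<beta> \<bullet> \<alpha>)) / (\<alpha> \<bullet> \<alpha>) \<in> \<int>"
  using RS unfolding root_system_def by auto

lemma DsubPhi: "\<Delta> \<subseteq> \<Phi>" and indD: "independent \<Delta>"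
  and finD: "finite \<Delta>"
  using BS finPhi unfolding is_base_def by (auto intro: finite_subset)

lemma refl_mem: "\<alpha> \<in> \<Phi> \<Longrightarrow> x \<in> \<Phi> \<Longrightarrow> refl \<alpha> x \<in> \<Phi>"
  using reflPhi by blast

lemma neg_mem: "x \<in> \<Phi> \<Longrightarrow> - x \<in> \<Phi>"
  using refl_mem[of x x] refl_self[of x] zPhi by fastforce

lemma pos_sub: "pos_roots \<Phi> \<Delta> \<subseteq> \<Phi>"
  unfolding pos_roots_def by auto

lemma neg_sub: "neg_roots \<Phi> \<Delta> \<subseteq> \<Phi>"
  unfolding neg_roots_def using pos_sub neg_mem by auto

lemma pos_comb: "x \<in> \<Phi> \<Longrightarrow> x = (\<Sum>d\<in>\<Delta>. of_int (c d) *\<^sub>R d) \<Longrightarrow> (\<forall>d\<in>\<Delta>. c d \<ge> 0)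
   \<Longrightarrow> x \<in> pos_roots \<Phi> \<Delta>"
  unfolding pos_roots_def by blast

lemma neg_comb: "x \<in> \<Phi> \<Longrightarrow> x = (\<Sum>d\<in>\<Delta>. of_int (c d) *\<^sub>R d) \<Longrightarrow> (\<forall>d\<in>\<Delta>. c d \<le> 0)
   \<Longrightarrow> x \<in> neg_roots \<Phi> \<Delta>"
proof -
  assume x: "x \<in> \<Phi>" "x = (\<Sum>d\<in>\<Delta>. of_int (c d) *\<^sub>R d)" "\<forall>d\<in>\<Delta>. c d \<le> 0"
  have "- x = (\<Sum>d\<in>\<Delta>. of_int (- c d) *\<^sub>R d)"
    using x(2) by (simp add: sum_negf[symmetric])
  moreover have "- x \<in> \<Phi>" using x(1) neg_mem by blast
  ultimately have "- x \<in> pos_roots \<Phi> \<Delta>"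
    using x(3) by (intro pos_comb[of _ "\<lambda>d. - c d"]) auto
  then show ?thesis unfolding neg_roots_def by (metis image_eqI minus_minus)
qed

lemma pos_or_neg: "x \<in> \<Phi> \<Longrightarrow> x \<in> pos_roots \<Phi> \<Delta> \<or> x \<in> neg_roots \<Phi> \<Delta>"
  using BS pos_comb neg_comb unfolding is_base_def by blast

lemma pos_neg_disj: "x \<in> pos_roots \<Phi> \<Delta> \<Longrightarrow> x \<in> neg_roots \<Phi> \<Delta> \<Longrightarrow> False"
proof -
  assume p: "x \<in> pos_roots \<Phi> \<Delta>" and n: "x \<in> neg_roots \<Phi> \<Delta>"
  obtain a where a: "x = (\<Sum>d\<in>\<Delta>. of_int (a d) *\<^sub>R d)" "\<forall>d\<in>\<Delta>. a d \<ge> 0" "x \<in> \<Phi>"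
    using p unfolding pos_roots_def by auto
  obtain y where y: "y \<in> pos_roots \<Phi> \<Delta>" "x = - y" using n unfolding neg_roots_def by auto
  obtain b where b: "y = (\<Sum>d\<in>\<Delta>. of_int (b d) *\<^sub>R d)" "\<forall>d\<in>\<Delta>. b d \<ge> 0"
    using y unfolding pos_roots_def by auto
  have e: "(\<Sum>d\<in>\<Delta>. of_int (a d) *\<^sub>R d) + (\<Sum>d\<in>\<Delta>. of_int (b d) *\<^sub>R d) = 0"
  proof -
    have "x + y = 0" using y(2) by simp
    then show ?thesis using a(1) b(1) by simp
  qed
  have "(\<Sum>d\<in>\<Delta>. real_of_int (a d + b d) *\<^sub>R d) = 0"
    using e by (simp add: scaleR_add_left sum.distrib)
  then have z: "\<And>d. d \<in> \<Delta> \<Longrightarrow> real_of_int (a d + b d) = 0"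
  proof -
    fix d assume "d \<in> \<Delta>"
    have "\<forall>S\<subseteq>\<Delta>. finite S \<longrightarrow> (\<forall>u. (\<Sum>v\<in>S. u v *\<^sub>R v) = 0 \<longrightarrow> (\<forall>v\<in>S. u v = 0))"
      using indD independent_explicit_finite_subsets by blast
    then have H: "\<And>u. (\<Sum>v\<in>\<Delta>. u v *\<^sub>R v) = 0 \<Longrightarrow> (\<forall>v\<in>\<Delta>. u v = 0)"
      using finD by auto
    show "real_of_int (a d + b d) = 0"
      using H[of "\<lambda>d. real_of_int (a d + b d)"] \<open>d \<in> \<Delta>\<close> \<open>(\<Sum>d\<in>\<Delta>. real_of_int (a d + b d) *\<^sub>R d) = 0\<close> by blast
  qed
  have "\<And>d. d \<in> \<Delta> \<Longrightarrow> a d = 0"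
    using z a(2) b(2) by (metis add_nonneg_eq_0_iff of_int_eq_0_iff)
  then have "x = 0" using a(1) by simp
  then show False using a(3) zPhi by simp
qed

lemma weyl_props: "w \<in> weyl_group \<Phi> \<Longrightarrow> linear w \<and> bij w \<and> w ` \<Phi> = \<Phi>"
proof (induction rule: weyl_group.induct)
  case weyl_id
  then show ?case by (simp add: id_def[symmetric] linear_id)
next
  case (weyl_step w \<alpha>)
  have a0: "\<alpha> \<noteq> 0" using weyl_step zPhi by auto
  have "linear (refl \<alpha> \<circ> w)" using weyl_step refl_linear linear_compose by blast
  moreover have "bij (refl \<alpha> \<circ> w)" using weyl_step a0 refl_bij bij_comp by blast
  moreover have "(refl \<alpha> \<circ> w) ` \<Phi> = \<Phi>" 
  proof -
    have "(refl \<alpha> \<circ> w) ` \<Phi> = refl \<alpha> ` (w ` \<Phi>)" by (rule image_comp[symmetric])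
    then show ?thesis using weyl_step reflPhi by simp
  qed
  ultimately show ?case by blast
qed

lemma inv_mem: "w \<in> weyl_group \<Phi> \<Longrightarrow> y \<in> \<Phi> \<Longrightarrow> inv w y \<in> \<Phi>"
proof -
  assume w: "w \<in> weyl_group \<Phi>" and y: "y \<in> \<Phi>"
  then obtain x where "x \<in> \<Phi>" "y = w x" using weyl_props by blast
  then show ?thesis using weyl_props[OF w] by (simp add: bij_is_inj)
qed

lemma inv_lin: "w \<in> weyl_group \<Phi> \<Longrightarrow> inv w (x - c *\<^sub>R y) = inv w x - c *\<^sub>R inv w y"
proof -
  assume w: "w \<in> weyl_group \<Phi>"
  have L: "linear w" and B: "bij w" using weyl_props[OF w] by auto
  have "w (inv w x - c *\<^sub>R inv w y) = x - c *\<^sub>R y"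
    using L B by (simp add: linear_diff linear_scale bij_inv_eq_iff surj_f_inv_f bij_is_surj)
  then show ?thesis using B by (metis bij_inv_eq_iff)
qed

lemma inv_neg: "w \<in> weyl_group \<Phi> \<Longrightarrow> inv w (- x) = - inv w x"
  using inv_lin[of w 0 1 x] inv_lin[of w x 1 x] by simp


lemma pos_mem: "x \<in> pos_roots \<Phi> \<Delta> \<Longrightarrow> x \<in> \<Phi>" using pos_sub by blast

lemma neg_of_pos: "x \<in> pos_roots \<Phi> \<Delta> \<Longrightarrow> - x \<in> neg_roots \<Phi> \<Delta>"
  unfolding neg_roots_def by blast

lemma pos_of_neg: "- x \<in> neg_roots \<Phi> \<Delta> \<Longrightarrow> x \<in> pos_roots \<Phi> \<Delta>"
  unfolding neg_roots_def by (metis image_iff minus_minus)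

lemma pos_of_neg': "x \<in> neg_roots \<Phi> \<Delta> \<Longrightarrow> - x \<in> pos_roots \<Phi> \<Delta>"
  unfolding neg_roots_def by auto

lemma key:
  assumes u: "u \<in> weyl_group \<Phi>" and aP: "\<alpha> \<in> pos_roots \<Phi> \<Delta>"
    and uaP: "inv u \<alpha> \<in> pos_roots \<Phi> \<Delta>" and cP: "c \<in> pos_roots \<Phi> \<Delta>"
    and rcN: "refl \<alpha> c \<in> neg_roots \<Phi> \<Delta>" and ucN: "inv u c \<in> neg_roots \<Phi> \<Delta>"
  shows "inv u (refl \<alpha> c) \<in> neg_roots \<Phi> \<Delta>"
proof -
  have aF: "\<alpha> \<in> \<Phi>" and cF: "c \<in> \<Phi>" using aP cP pos_mem by auto
  obtain a where a: "c = (\<Sum>d\<in>\<Delta>. of_int (a d) *\<^sub>R d)" "\<forall>d\<in>\<Delta>. a d \<ge> 0"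
    using cP unfolding pos_roots_def by auto
  obtain b where b: "\<alpha> = (\<Sum>d\<in>\<Delta>. of_int (b d) *\<^sub>R d)" "\<forall>d\<in>\<Delta>. b d \<ge> 0"
    using aP unfolding pos_roots_def by auto
  have "(2 * (c \<bullet> \<alpha>)) / (\<alpha> \<bullet> \<alpha>) \<in> \<int>" using intPhi aF cF by blast
  then obtain m where m: "(2 * (c \<bullet> \<alpha>)) / (\<alpha> \<bullet> \<alpha>) = of_int m" by (metis Ints_cases)
  have rc: "refl \<alpha> c = c - of_int m *\<^sub>R \<alpha>" unfolding refl_def m by simp
  have rcF: "refl \<alpha> c \<in> \<Phi>" using refl_mem aF cF by blast
  have mpos: "m \<ge> 0"
  proof (rule ccontr)
    assume "\<not> m \<ge> 0"
    then have "\<And>d. d\<in>\<Delta> \<Longrightarrow> m * b d \<le> 0" using b(2) \<open>\<not> m \<ge> 0\<close> by (meson mult_nonpos_nonneg linorder_not_le less_imp_le)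
    then have co: "\<forall>d\<in>\<Delta>. a d - m * b d \<ge> 0" using a(2)
      by (smt (verit))
    have eqn: "refl \<alpha> c = (\<Sum>d\<in>\<Delta>. of_int (a d - m * b d) *\<^sub>R d)"
      unfolding rc using lin_comb_diff[where D=\<Delta> and a=a and m=m and b=b] a(1) b(1) by simp
    have "refl \<alpha> c \<in> pos_roots \<Phi> \<Delta>" by (rule pos_comb[OF rcF eqn co])
    then show False using rcN pos_neg_disj by blast
  qed
  obtain d where d: "- inv u c = (\<Sum>x\<in>\<Delta>. of_int (d x) *\<^sub>R x)" "\<forall>x\<in>\<Delta>. d x \<ge> 0"
    using pos_of_neg'[OF ucN] unfolding pos_roots_def by auto
  obtain e where e: "inv u \<alpha> = (\<Sum>x\<in>\<Delta>. of_int (e x) *\<^sub>R x)" "\<forall>x\<in>\<Delta>. e x \<ge> 0"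
    using uaP unfolding pos_roots_def by auto
  have d2: "inv u c = (\<Sum>x\<in>\<Delta>. of_int (- d x) *\<^sub>R x)"
    using d(1) by (simp add: sum_negf[symmetric] minus_equation_iff[of "inv u c"])
  have "inv u (refl \<alpha> c) = inv u c - of_int m *\<^sub>R inv u \<alpha>"
    unfolding rc using inv_lin[OF u] by simp
  also have "\<dots> = (\<Sum>x\<in>\<Delta>. of_int (- d x - m * e x) *\<^sub>R x)"
    unfolding d2 e(1) by (rule lin_comb_diff)
  finally have eq: "inv u (refl \<alpha> c) = (\<Sum>x\<in>\<Delta>. of_int (- d x - m * e x) *\<^sub>R x)" .
  have "\<And>x. x\<in>\<Delta> \<Longrightarrow> m * e x \<ge> 0" using e(2) mpos by simp
  then have co: "\<forall>x\<in>\<Delta>. - d x - m * e x \<le> 0" using d(2) by (smt (verit))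
  have iF: "inv u (refl \<alpha> c) \<in> \<Phi>" using inv_mem[OF u rcF] .
  show ?thesis by (rule neg_comb[OF iF eq co])
qed

lemma count:
  assumes u: "u \<in> weyl_group \<Phi>" and aP: "\<alpha> \<in> pos_roots \<Phi> \<Delta>"
    and uaP: "inv u \<alpha> \<in> pos_roots \<Phi> \<Delta>"
  shows "card (N_set \<Phi> \<Delta> u) < card (N_set \<Phi> \<Delta> (refl \<alpha> \<circ> u))"
proof -
  have aF: "\<alpha> \<in> \<Phi>" using aP pos_mem by auto
  have a0: "\<alpha> \<noteq> 0" using aF zPhi by auto
  have bu: "bij u" using weyl_props[OF u] by auto
  have br: "bij (refl \<alpha>)" using refl_bij[OF a0] .
  have invc: "inv (refl \<alpha> \<circ> u) = inv u \<circ> refl \<alpha>"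
    using o_inv_distrib[OF br bu] refl_inv[OF a0] by simp
  define N' where "N' = N_set \<Phi> \<Delta> (refl \<alpha> \<circ> u)"
  have N'eq: "N' = {b \<in> pos_roots \<Phi> \<Delta>. inv u (refl \<alpha> b) \<in> neg_roots \<Phi> \<Delta>}"
    unfolding N'_def N_set_def invc by simp
  define N where "N = N_set \<Phi> \<Delta> u"
  have Neq: "N = {b \<in> pos_roots \<Phi> \<Delta>. inv u b \<in> neg_roots \<Phi> \<Delta>}"
    unfolding N_def N_set_def by simp
  define X where "X = refl \<alpha> ` N'"
  have cX: "card X = card N'" unfolding X_def
    by (rule card_image[OF inj_on_subset[OF bij_is_inj[OF br] subset_UNIV]])
  have XF: "X \<subseteq> \<Phi>" unfolding X_def N'eq using refl_mem[OF aF] pos_mem by auto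
  have finX: "finite X" using XF finPhi finite_subset by blast
  define f where "f = (\<lambda>c. if refl \<alpha> c \<in> pos_roots \<Phi> \<Delta> then c else refl \<alpha> c)"
  have rr: "\<And>x. refl \<alpha> (refl \<alpha> x) = x" using refl_refl[OF a0] .
  have ra: "refl \<alpha> \<alpha> = - \<alpha>" using refl_self[OF a0] .
  have maN: "- \<alpha> \<in> neg_roots \<Phi> \<Delta>" using neg_of_pos[OF aP] .
  have sub: "f ` N \<subseteq> X - {- \<alpha>}"
  proof
    fix y assume "y \<in> f ` N"
    then obtain c where c: "c \<in> N" "y = f c" by blast
    have cP: "c \<in> pos_roots \<Phi> \<Delta>" and ucN: "inv u c \<in> neg_roots \<Phi> \<Delta>" using c(1) Neq by auto
    show "y \<in> X - {- \<alpha>}"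
    proof (cases "refl \<alpha> c \<in> pos_roots \<Phi> \<Delta>")
      case True
      then have "y = c" using c(2) f_def by simp
      moreover have "refl \<alpha> c \<in> N'" using True ucN rr N'eq by simp
      moreover have "c \<noteq> - \<alpha>" using cP maN pos_neg_disj by blast
      ultimately show ?thesis unfolding X_def using rr by (metis DiffI image_eqI singletonD)
    next
      case False
      then have y: "y = refl \<alpha> c" using c(2) f_def by simp
      have rcN: "refl \<alpha> c \<in> neg_roots \<Phi> \<Delta>"
        using False pos_or_neg refl_mem[OF aF] cP pos_mem by blast
      have "c \<in> N'" using key[OF u aP uaP cP rcN ucN] cP N'eq by simp
      moreover have "refl \<alpha> c \<noteq> - \<alpha>"
      proof
        assume "refl \<alpha> c = - \<alpha>"
        then have "c = \<alpha>" using rr ra by metis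
        then show False using ucN uaP pos_neg_disj by blast
      qed
      ultimately show ?thesis unfolding X_def y by blast
    qed
  qed
  have inj: "inj_on f N"
  proof
    fix c1 c2 assume c1: "c1 \<in> N" and c2: "c2 \<in> N" and eq: "f c1 = f c2"
    have p1: "c1 \<in> pos_roots \<Phi> \<Delta>" and p2: "c2 \<in> pos_roots \<Phi> \<Delta>" using c1 c2 Neq by auto
    show "c1 = c2"
    proof (cases "refl \<alpha> c1 \<in> pos_roots \<Phi> \<Delta>"; cases "refl \<alpha> c2 \<in> pos_roots \<Phi> \<Delta>")
      assume "refl \<alpha> c1 \<in> pos_roots \<Phi> \<Delta>" "refl \<alpha> c2 \<in> pos_roots \<Phi> \<Delta>"
      then show ?thesis using eq f_def by simp
    next
      assume "refl \<alpha> c1 \<notin> pos_roots \<Phi> \<Delta>" "refl \<alpha> c2 \<notin> pos_roots \<Phi> \<Delta>"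
      then show ?thesis using eq f_def rr by (metis)
    next
      assume h: "refl \<alpha> c1 \<in> pos_roots \<Phi> \<Delta>" "refl \<alpha> c2 \<notin> pos_roots \<Phi> \<Delta>"
      then have "c1 = refl \<alpha> c2" using eq f_def by simp
      then show ?thesis using h p1 by simp
    next
      assume h: "refl \<alpha> c1 \<notin> pos_roots \<Phi> \<Delta>" "refl \<alpha> c2 \<in> pos_roots \<Phi> \<Delta>"
      then have "refl \<alpha> c1 = c2" using eq f_def by simp
      then show ?thesis using h p2 by simp
    qed
  qed
  have mX: "- \<alpha> \<in> X"
  proof -
    have "inv u (refl \<alpha> \<alpha>) = - inv u \<alpha>" using ra inv_neg[OF u] by simp
    then have "\<alpha> \<in> N'" using N'eq aP neg_of_pos[OF uaP] by simp
    then show ?thesis unfolding X_def using ra by (metis image_eqI)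
  qed
  have "card N = card (f ` N)" using inj by (simp add: card_image)
  also have "\<dots> \<le> card (X - {- \<alpha>})" using sub finX by (simp add: card_mono)
  also have "\<dots> < card X" using mX finX by (metis card_Diff1_less)
  finally show ?thesis using cX N_def N'_def by simp
qed

lemma step_card: "bruhat_step \<Phi> \<Delta> x y \<Longrightarrow> card (N_set \<Phi> \<Delta> x) < card (N_set \<Phi> \<Delta> y)"
proof -
  assume "bruhat_step \<Phi> \<Delta> x y"
  then obtain \<alpha> where x: "x \<in> weyl_group \<Phi>" and aP: "\<alpha> \<in> pos_roots \<Phi> \<Delta>"
    and y: "y = refl \<alpha> \<circ> x" and yN: "inv y \<alpha> \<in> neg_roots \<Phi> \<Delta>"
    unfolding bruhat_step_def by blast
  have aF: "\<alpha> \<in> \<Phi>" using aP pos_mem by auto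
  have a0: "\<alpha> \<noteq> 0" using aF zPhi by auto
  have invc: "inv y = inv x \<circ> refl \<alpha>"
    using o_inv_distrib[OF refl_bij[OF a0], of x] weyl_props[OF x] refl_inv[OF a0] y by simp
  have "inv y \<alpha> = - inv x \<alpha>" using invc refl_self[OF a0] inv_neg[OF x] by simp
  then have "inv x \<alpha> \<in> pos_roots \<Phi> \<Delta>" using yN pos_of_neg by simp
  then show ?thesis using count[OF x aP] y by simp
qed

lemma step_weyl: "bruhat_step \<Phi> \<Delta> x y \<Longrightarrow> y \<in> weyl_group \<Phi>"
  unfolding bruhat_step_def using pos_mem by (auto intro: weyl_step)

lemma less_card: "bruhat_less \<Phi> \<Delta> x y \<Longrightarrow> card (N_set \<Phi> \<Delta> x) < card (N_set \<Phi> \<Delta> y) \<and>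
   (bruhat_step \<Phi> \<Delta> x y \<or> card (N_set \<Phi> \<Delta> x) + 2 \<le> card (N_set \<Phi> \<Delta> y))"
  unfolding bruhat_less_def
proof (induction rule: tranclp.induct)
  case (r_into_trancl a b)
  then show ?case using step_card by blast
next
  case (trancl_into_trancl a b c)
  then show ?case using step_card[of b c] by auto
qed


lemma char:
  assumes w: "w \<in> weyl_group \<Phi>" and v: "v \<in> weyl_group \<Phi>"
    and bl: "bruhat_less \<Phi> \<Delta> w v"
    and bw: "\<beta> \<in> N_gamma \<Phi> \<Delta> \<gamma> w" and bv: "\<beta> \<in> N_set \<Phi> \<Delta> v"
    and el: "ell_gamma \<Phi> \<Delta> \<gamma> w = ell_gamma \<Phi> \<Delta> \<gamma> v"
    and iv: "inv v \<beta> = - \<gamma>"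
  shows "\<exists>\<alpha>\<in>pos_roots \<Phi> \<Delta>. v = refl \<alpha> \<circ> w \<and> refl \<alpha> \<beta> = - w \<gamma>"
proof -
  have bvv: "bij v" and bww: "bij w" and lw: "linear w"
    using weyl_props[OF v] weyl_props[OF w] by auto
  have injiv: "inj (inv v)" using bij_imp_bij_inv[OF bvv] bij_is_inj by blast
  have finN: "\<And>u. finite (N_set \<Phi> \<Delta> u)"
    unfolding N_set_def using finPhi pos_sub by (auto intro: finite_subset)
  have NG: "N_gamma \<Phi> \<Delta> \<gamma> v = N_set \<Phi> \<Delta> v - {\<beta>}"
  proof (intro set_eqI iffI)
    fix b assume "b \<in> N_gamma \<Phi> \<Delta> \<gamma> v"
    then obtain \<delta> where b: "b \<in> pos_roots \<Phi> \<Delta>" "inv v b = - \<delta>" "\<delta> \<in> pos_roots \<Phi> \<Delta>" "\<delta> \<noteq> \<gamma>"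
      unfolding N_gamma_def h_gamma_def by auto
    have "inv v b \<in> neg_roots \<Phi> \<Delta>" using b neg_of_pos by simp
    moreover have "b \<noteq> \<beta>" using b iv by auto
    ultimately show "b \<in> N_set \<Phi> \<Delta> v - {\<beta>}" unfolding N_set_def using b by simp
  next
    fix b assume "b \<in> N_set \<Phi> \<Delta> v - {\<beta>}"
    then have b: "b \<in> pos_roots \<Phi> \<Delta>" "inv v b \<in> neg_roots \<Phi> \<Delta>" "b \<noteq> \<beta>"
      unfolding N_set_def by auto
    obtain \<delta> where d: "\<delta> \<in> pos_roots \<Phi> \<Delta>" "inv v b = - \<delta>"
      using b(2) unfolding neg_roots_def by auto
    have "\<delta> \<noteq> \<gamma>"
    proof
      assume "\<delta> = \<gamma>"
      then have "inv v b = inv v \<beta>" using d iv by simp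
      then show False using injiv b(3) by (meson injD)
    qed
    then show "b \<in> N_gamma \<Phi> \<Delta> \<gamma> v" unfolding N_gamma_def h_gamma_def using b d by auto
  qed
  have sub: "N_gamma \<Phi> \<Delta> \<gamma> w \<subseteq> N_set \<Phi> \<Delta> w"
    unfolding N_gamma_def N_set_def h_gamma_def neg_roots_def by auto
  have "ell_gamma \<Phi> \<Delta> \<gamma> w \<le> card (N_set \<Phi> \<Delta> w)"
    unfolding ell_gamma_def using card_mono[OF finN sub] .
  moreover have "ell_gamma \<Phi> \<Delta> \<gamma> v + 1 = card (N_set \<Phi> \<Delta> v)"
    unfolding ell_gamma_def NG using bv finN
    by (metis card_Diff1_less card_Diff_singleton Suc_diff_1 Suc_eq_plus1 zero_less_iff_neq_zero less_nat_zero_code)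
  ultimately have "card (N_set \<Phi> \<Delta> v) \<le> card (N_set \<Phi> \<Delta> w) + 1" using el by simp
  then have "bruhat_step \<Phi> \<Delta> w v" using less_card[OF bl] by simp
  then obtain \<alpha> where aP: "\<alpha> \<in> pos_roots \<Phi> \<Delta>" and vv: "v = refl \<alpha> \<circ> w"
    unfolding bruhat_step_def by blast
  have aF: "\<alpha> \<in> \<Phi>" using aP pos_mem by auto
  have a0: "\<alpha> \<noteq> 0" using aF zPhi by auto
  have invc: "inv v = inv w \<circ> refl \<alpha>"
    using o_inv_distrib[OF refl_bij[OF a0] bww] refl_inv[OF a0] vv by simp
  have "inv w (refl \<alpha> \<beta>) = - \<gamma>" using iv invc by simp
  then have "w (inv w (refl \<alpha> \<beta>)) = w (- \<gamma>)" by simp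
  then have "refl \<alpha> \<beta> = w (- \<gamma>)" using bww by (simp add: bij_is_surj surj_f_inv_f)
  also have "\<dots> = - w \<gamma>" using lw by (simp add: linear_neg)
  finally show ?thesis using aP vv by blast
qed

lemma uniq_root:
  assumes a1: "\<alpha>1 \<in> pos_roots \<Phi> \<Delta>" and a2: "\<alpha>2 \<in> pos_roots \<Phi> \<Delta>"
    and eq: "k1 *\<^sub>R \<alpha>1 = k2 *\<^sub>R \<alpha>2" and nz: "k1 *\<^sub>R \<alpha>1 \<noteq> 0"
  shows "\<alpha>1 = \<alpha>2"
proof -
  have k1: "k1 \<noteq> 0" using nz by auto
  have "\<alpha>1 = (k2 / k1) *\<^sub>R \<alpha>2"
    using eq k1 by (metis (no_types, lifting) divide_inverse_commute scaleR_scaleR inverse_eq_divide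
        mult.commute nonzero_divide_eq_eq scaleR_left_commute divide_self_if scaleR_one)
  then have c: "(k2 / k1) *\<^sub>R \<alpha>2 \<in> \<Phi>" and "\<alpha>2 \<in> \<Phi>" using a1 a2 pos_mem by auto
  then have "k2 / k1 = 1 \<or> k2 / k1 = -1" using redPhi by blast
  moreover have "k2 / k1 \<noteq> -1"
  proof
    assume "k2 / k1 = -1"
    then have "\<alpha>1 = - \<alpha>2" using \<open>\<alpha>1 = (k2 / k1) *\<^sub>R \<alpha>2\<close> by simp
    then show False using a1 neg_of_pos[OF a2] pos_neg_disj by simp
  qed
  ultimately show ?thesis using \<open>\<alpha>1 = (k2 / k1) *\<^sub>R \<alpha>2\<close> by simp
qed

end


theorem corollary3p2:
  fixes \<Phi> \<Delta> :: "'a::euclidean_space set" and \<gamma> \<beta> :: 'a and w :: "'a \<Rightarrow> 'a"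
  assumes "root_system \<Phi>" and "irreducible_rs \<Phi>" and "is_base \<Phi> \<Delta>"
    and "highest_root \<Phi> \<Delta> \<gamma>"
    and "w \<in> weyl_group \<Phi>" and "\<beta> \<in> pos_roots \<Phi> \<Delta>"
  shows "\<forall>v1 v2.
     (v1 \<in> weyl_group \<Phi> \<and> bruhat_less \<Phi> \<Delta> w v1 \<and>
      \<beta> \<in> N_gamma \<Phi> \<Delta> \<gamma> w \<inter> N_set \<Phi> \<Delta> v1 \<and>
      ell_gamma \<Phi> \<Delta> \<gamma> w = ell_gamma \<Phi> \<Delta> \<gamma> v1 \<and> inv v1 \<beta> = - \<gamma>) \<and>
     (v2 \<in> weyl_group \<Phi> \<and> bruhat_less \<Phi> \<Delta> w v2 \<and>
      \<beta> \<in> N_gamma \<Phi> \<Delta> \<gamma> w \<inter> N_set \<Phi> \<Delta> v2 \<and>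
      ell_gamma \<Phi> \<Delta> \<gamma> w = ell_gamma \<Phi> \<Delta> \<gamma> v2 \<and> inv v2 \<beta> = - \<gamma>)
     \<longrightarrow> v1 = v2"
proof (intro allI impI)
  fix v1 v2
  assume H: "(v1 \<in> weyl_group \<Phi> \<and> bruhat_less \<Phi> \<Delta> w v1 \<and>
      \<beta> \<in> N_gamma \<Phi> \<Delta> \<gamma> w \<inter> N_set \<Phi> \<Delta> v1 \<and>
      ell_gamma \<Phi> \<Delta> \<gamma> w = ell_gamma \<Phi> \<Delta> \<gamma> v1 \<and> inv v1 \<beta> = - \<gamma>) \<and>
     (v2 \<in> weyl_group \<Phi> \<and> bruhat_less \<Phi> \<Delta> w v2 \<and>
      \<beta> \<in> N_gamma \<Phi> \<Delta> \<gamma> w \<inter> N_set \<Phi> \<Delta> v2 \<and>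
      ell_gamma \<Phi> \<Delta> \<gamma> w = ell_gamma \<Phi> \<Delta> \<gamma> v2 \<and> inv v2 \<beta> = - \<gamma>)"
  note RS = assms(1) and BS = assms(3) and w = assms(5)
  obtain \<alpha>1 where a1: "\<alpha>1 \<in> pos_roots \<Phi> \<Delta>" "v1 = refl \<alpha>1 \<circ> w" "refl \<alpha>1 \<beta> = - w \<gamma>"
    using char[OF RS BS w] H by blast
  obtain \<alpha>2 where a2: "\<alpha>2 \<in> pos_roots \<Phi> \<Delta>" "v2 = refl \<alpha>2 \<circ> w" "refl \<alpha>2 \<beta> = - w \<gamma>"
    using char[OF RS BS w] H by blast
  have bw: "\<beta> \<in> N_gamma \<Phi> \<Delta> \<gamma> w" using H by blast
  have nz: "\<beta> + w \<gamma> \<noteq> 0"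
  proof
    assume "\<beta> + w \<gamma> = 0"
    then have "w (- \<gamma>) = \<beta>" using weyl_props[OF RS BS w] by (simp add: linear_neg add_eq_0_iff2)
    then have "inv w \<beta> = - \<gamma>" using weyl_props[OF RS BS w] by (metis bij_is_inj inv_f_f)
    then show False using bw unfolding N_gamma_def h_gamma_def by auto
  qed
  have e: "\<And>\<alpha>. refl \<alpha> \<beta> = - w \<gamma> \<Longrightarrow> ((2 * (\<beta> \<bullet> \<alpha>)) / (\<alpha> \<bullet> \<alpha>)) *\<^sub>R \<alpha> = \<beta> + w \<gamma>"
    unfolding refl_def by (simp add: algebra_simps eq_neg_iff_add_eq_0)
  have "\<alpha>1 = \<alpha>2"
  proof (rule uniq_root[OF RS BS a1(1) a2(1)])
    show "((2 * (\<beta> \<bullet> \<alpha>1)) / (\<alpha>1 \<bullet> \<alpha>1)) *\<^sub>R \<alpha>1 = ((2 * (\<beta> \<bullet> \<alpha>2)) / (\<alpha>2 \<bullet> \<alpha>2)) *\<^sub>R \<alpha>2"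
      using e[OF a1(3)] e[OF a2(3)] by simp
    show "((2 * (\<beta> \<bullet> \<alpha>1)) / (\<alpha>1 \<bullet> \<alpha>1)) *\<^sub>R \<alpha>1 \<noteq> 0"
      using e[OF a1(3)] nz by simp
  qed
  then show "v1 = v2" using a1 a2 by simp
qed

end
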